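(* Let $m \geq 13$ be an odd integer. The digraph $L_{2m}$ admits a $\vec{C}_m$-factorization if and only if $3 \nmid m$.
   Context: $L_{2m} = \vec{X}(m,\{1,3\}) \wr \overline{K}_2$ is the digraph with vertex set $\{x_a, y_a : a \in \mathbb{Z}_m\}$ whose arcs are exactly $(u_a, v_b)$ for all $u, v \in \{x,y\}$ and all $a,b \in \mathbb{Z}_m$ with $b - a \equiv 1$ or $b-a \equiv 3 \pmod m$. A $\vec{C}_m$-factor of a digraph is a spanning subdigraph that is a disjoint union of directed $m$-cycles; a $\vec{C}_m$-factorization is a partition of the arc set into $\vec{C}_m$-factors. *)

theory Defs
  imports Main
begin

text \<open>Vertices of L_2m: (False, a) is x_a, (True, a) is y_a, with a in {0..<m} representing Z_m.\<close>

definition L_verts :: "nat \<Rightarrow> (bool \<times> nat) set" where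
  "L_verts m = UNIV \<times> {0..<m}"

definition L_arcs :: "nat \<Rightarrow> ((bool \<times> nat) \<times> (bool \<times> nat)) set" where
  "L_arcs m = {((u, a), (v, b)) | u v a b. a < m \<and> b < m \<and>
                 (b = (a + 1) mod m \<or> b = (a + 3) mod m)}"

definition is_dicycle :: "nat \<Rightarrow> ('v \<times> 'v) set \<Rightarrow> bool" where
  "is_dicycle k C \<longleftrightarrow> k \<ge> 2 \<and> (\<exists>f :: nat \<Rightarrow> 'v. inj_on f {0..<k} \<and>
       C = {(f i, f (Suc i mod k)) | i. i < k})"

definition arc_verts :: "('v \<times> 'v) set \<Rightarrow> 'v set" where
  "arc_verts C = fst ` C \<union> snd ` C"

definition is_Ck_factor :: "'v set \<Rightarrow> ('v \<times> 'v) set \<Rightarrow> nat \<Rightarrow> ('v \<times> 'v) set \<Rightarrow> bool" where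
  "is_Ck_factor V A k F \<longleftrightarrow> F \<subseteq> A \<and>
     (\<exists>\<C>. (\<forall>C\<in>\<C>. is_dicycle k C) \<and> F = \<Union>\<C> \<and>
          (\<forall>C\<in>\<C>. \<forall>D\<in>\<C>. C \<noteq> D \<longrightarrow> arc_verts C \<inter> arc_verts D = {}) \<and>
          \<Union>(arc_verts ` \<C>) = V)"

definition has_Ck_factorization :: "'v set \<Rightarrow> ('v \<times> 'v) set \<Rightarrow> nat \<Rightarrow> bool" where
  "has_Ck_factorization V A k \<longleftrightarrow>
     (\<exists>\<F>. (\<forall>F\<in>\<F>. is_Ck_factor V A k F) \<and> \<Union>\<F> = A \<and>
          (\<forall>F\<in>\<F>. \<forall>G\<in>\<F>. F \<noteq> G \<longrightarrow> F \<inter> G = {}))"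

end

theory Submission
  imports Defs
begin

definition qc :: "nat \<Rightarrow> nat \<Rightarrow> nat" where
 "qc m a = (if a < m-5 then a mod 2 else if a = m-4 then 1 else if a = m-2 then 0 else 2)"

lemma qc_lt: "qc m a < 3" unfolding qc_def by auto

lemma tab1: "j < 8 \<Longrightarrow> j + d < 8 \<Longrightarrow> d = 1 \<or> d = 3 \<Longrightarrow> [1,0,1,2,1,2,0,2::nat] ! j \<noteq> [1,0,1,2,1,2,0,2] ! (j+d)"
  by (auto simp: less_Suc_eq numeral_eq_Suc)
lemma tab2: "j < 8 \<Longrightarrow> \<not> j + d < 8 \<Longrightarrow> d = 1 \<or> d = 3 \<Longrightarrow> [1,0,1,2,1,2,0,2::nat] ! j \<noteq> (j+d-8) mod 2"
  by (auto simp: less_Suc_eq numeral_eq_Suc)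

lemma qc_proper:
  assumes "odd m" "m \<ge> 13" "a < m" "d = 1 \<or> d = 3"
  shows "qc m a \<noteq> qc m ((a + d) mod m)"
proof -
  show ?thesis
  proof (cases "a + d < m-5")
    case True
    then have e: "(a+d) mod m = a + d" by simp
    have "a mod 2 \<noteq> (a+d) mod 2" using assms(4) by (elim disjE) presburger+
    then show ?thesis using True unfolding qc_def e by auto
  next
    case False
    then have "a \<ge> m - 8" using assms(4) by auto
    then have "a = m - 8 + (a - (m-8))" "a - (m-8) < 8" using assms(3) by auto
    then obtain j where j: "a = m - 8 + j" "j < 8" by blast
    have o1: "(m - 8) mod 2 = 1 \<and> Suc (m-8) mod 2 = 0 \<and> Suc (Suc (m-8)) mod 2 = 1"
      using assms(1,2)
    proof (elim oddE)
      fix b assume "13 \<le> m" "m = 2*b+1"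
      then have "m - 8 = 2*(b-4) + 1" by simp
      then show ?thesis by simp
    qed
    have o2: "Suc (m - 8) = m - 7" "Suc (Suc (m-8)) = m - 6" "m - 8 + 3 = m - 5" "m - 8 + 4 = m - 4" "m - 8 + 5 = m - 3" "m - 8 + 6 = m - 2" "m - 8 + 7 = m - 1"
      using assms(2) by auto
    have V: "qc m (m - 8 + i) = [1,0,1,2,1,2,0,2] ! i" if "i < 8" for i
    proof -
      have "i = 0 \<or> i = 1 \<or> i = 2 \<or> i = 3 \<or> i = 4 \<or> i = 5 \<or> i = 6 \<or> i = 7" using that by linarith
      then show ?thesis using assms(2) o1 unfolding qc_def by (elim disjE; auto simp: o2)
    qed
    have W: "qc m t = t mod 2" if "t < 3" for t using that assms(2) unfolding qc_def by auto
    show ?thesis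
    proof (cases "j + d < 8")
      case True
      then have "(a+d) mod m = m - 8 + (j+d)" using j assms(2,3) by simp
      then show ?thesis using V[of j] V[of "j+d"] j True assms(4) tab1[of j d] by simp
    next
      case False
      then have "a + d = m + (j+d-8)" "j + d - 8 < m" using j assms(2,4) by auto
      then have "(a+d) mod m = j+d-8" by (simp only: mod_add_self1 mod_less)
      moreover have h: "j+d-8 < 3" using j assms(4) by auto
      ultimately show ?thesis using V[of j] W[OF h] j False assms(4) tab2[of j d] by simp
    qed
  qed
qed

lemma cop3: assumes "\<not> 3 dvd (m::nat)" shows "coprime m 3"
proof -
  have "gcd m 3 dvd 3" by simp
  then have "gcd m 3 \<le> 3" by (rule dvd_imp_le) simp
  moreover have "gcd m 3 \<noteq> 0" by simp
  moreover have "gcd m 3 \<noteq> 2" using \<open>gcd m 3 dvd 3\<close> by (metis dvd_antisym even_numeral odd_numeral  dvd_trans) 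
  moreover have "gcd m 3 \<noteq> 3" using assms by (metis gcd_dvd1)
  ultimately have "gcd m 3 = 1" by linarith
  then show ?thesis by (simp add: coprime_iff_gcd_eq_1)
qed
lemma inj3: assumes "\<not> 3 dvd (m::nat)" shows "inj_on (\<lambda>j. 3*j mod m) {0..<m}"
proof (rule inj_onI)
  fix j k assume j: "j \<in> {0..<m}" and k: "k \<in> {0..<m}" and e: "3*j mod m = 3*k mod m"
  have cop: "coprime m 3" using cop3 assms .
  show "j = k"
  proof (rule ccontr)
    assume "j \<noteq> k"
    then consider "j < k" | "k < j" by linarith
    then show False
    proof cases
      case 1
      then have "m dvd 3*k - 3*j" using e mod_eq_dvd_iff_nat[of "3*j" "3*k" m] by simp
      then have "m dvd 3*(k-j)" by (simp add: diff_mult_distrib2)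
      then have "m dvd k - j" using cop coprime_dvd_mult_right_iff by blast
      moreover have "k - j < m" "0 < k - j" using 1 k by auto
      ultimately show False using nat_dvd_not_less by blast
    next
      case 2
      then have "m dvd 3*j - 3*k" using e mod_eq_dvd_iff_nat[of "3*k" "3*j" m] by simp
      then have "m dvd 3*(j-k)" by (simp add: diff_mult_distrib2)
      then have "m dvd j - k" using cop coprime_dvd_mult_right_iff by blast
      moreover have "j - k < m" "0 < j - k" using 2 j by auto
      ultimately show False using nat_dvd_not_less by blast
    qed
  qed
qed


definition col :: "nat \<Rightarrow> nat \<Rightarrow> nat \<Rightarrow> bool" where
  "col m i a = (i = 0 \<or> qc m a + 1 = i)"

definition cyc :: "nat \<Rightarrow> nat \<Rightarrow> (nat \<Rightarrow> bool) \<Rightarrow> ((bool \<times> nat) \<times> (bool \<times> nat)) set" where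
  "cyc m d h = {((h a, a), (h ((a+d) mod m), (a+d) mod m)) | a. a < m}"

definition fac :: "nat \<Rightarrow> nat \<Rightarrow> ((bool \<times> nat) \<times> (bool \<times> nat)) set" where
  "fac m i = cyc m 1 (col m i) \<union> cyc m 3 (\<lambda>a. \<not> col m i a)"

lemma cyc_dicycle:
  assumes "m \<ge> 2" "bij_betw \<sigma> {0..<m} {0..<m}" "\<And>j. j < m \<Longrightarrow> \<sigma> (Suc j mod m) = (\<sigma> j + d) mod m"
  shows "is_dicycle m (cyc m d h)"
  unfolding is_dicycle_def
proof (intro conjI exI)
  show "m \<ge> 2" by fact
  let ?f = "\<lambda>j. (h (\<sigma> j), \<sigma> j)"
  show "inj_on ?f {0..<m}" using assms(2) unfolding bij_betw_def inj_on_def by auto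
  show "cyc m d h = {(?f i, ?f (Suc i mod m)) | i. i < m}"
  proof (intro equalityI subsetI)
    fix x assume "x \<in> cyc m d h"
    then obtain a where a: "a < m" "x = ((h a, a), (h ((a+d) mod m), (a+d) mod m))"
      unfolding cyc_def by blast
    then obtain j where j: "j < m" "\<sigma> j = a" using assms(2) unfolding bij_betw_def by (metis atLeastLessThan_iff imageE zero_le)
    then show "x \<in> {(?f i, ?f (Suc i mod m)) | i. i < m}" using a assms(3)[of j] by auto
  next
    fix x assume "x \<in> {(?f i, ?f (Suc i mod m)) | i. i < m}"
    then obtain j where j: "j < m" "x = (?f j, ?f (Suc j mod m))" by blast
    have "\<sigma> j < m" using j assms(2) unfolding bij_betw_def by auto
    then show "x \<in> cyc m d h" using j assms(3)[of j] unfolding cyc_def by auto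
  qed
qed

lemma cyc1: "m \<ge> 2 \<Longrightarrow> is_dicycle m (cyc m 1 h)"
  by (rule cyc_dicycle[where \<sigma> = id]) (auto simp: mod_Suc_eq)

lemma cyc3:
  assumes "m \<ge> 2" "\<not> 3 dvd m"
  shows "is_dicycle m (cyc m 3 h)"
proof (rule cyc_dicycle[where \<sigma> = "\<lambda>j. 3*j mod m"])
  show "m \<ge> 2" by fact
  have i: "inj_on (\<lambda>j. 3*j mod m) {0..<m}" using inj3 assms(2) .
  moreover have s: "(\<lambda>j. 3*j mod m) ` {0..<m} \<subseteq> {0..<m}" using assms(1) by auto
  ultimately have "(\<lambda>j. 3*j mod m) ` {0..<m} = {0..<m}" using endo_inj_surj[of "{0..<m}"] by auto
  then show "bij_betw (\<lambda>j. 3*j mod m) {0..<m} {0..<m}" using i by (simp add: bij_betw_def)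
  fix j assume "j < m"
  have "3 * (Suc j mod m) mod m = 3 * Suc j mod m" by (simp add: mod_mult_right_eq)
  also have "\<dots> = (3*j + 3) mod m" by (simp add: add.commute)
  also have "\<dots> = (3*j mod m + 3) mod m" by (simp add: mod_add_left_eq)
  finally show "3 * (Suc j mod m) mod m = (3*j mod m + 3) mod m" .
qed

lemma verts_cyc:
  assumes "m > 0"
  shows "arc_verts (cyc m d h) = (\<lambda>a. (h a, a)) ` {0..<m}"
proof -
  have 1: "fst ` cyc m d h = (\<lambda>a. (h a, a)) ` {0..<m}" unfolding cyc_def by force
  have 2: "snd ` cyc m d h \<subseteq> (\<lambda>a. (h a, a)) ` {0..<m}" unfolding cyc_def using assms by auto
  show ?thesis unfolding arc_verts_def using 1 2 by blast
qed

lemma cyc_sub: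
  assumes "m > 0" "d = 1 \<or> d = 3"
  shows "cyc m d h \<subseteq> L_arcs m"
  using assms unfolding cyc_def L_arcs_def by auto



lemma col_cover:
  assumes "qc m a \<noteq> qc m b"
  shows "\<exists>i<4. col m i a = u \<and> col m i b = v"
proof -
  have qa: "qc m a < 3" "qc m b < 3" by (rule qc_lt)+
  show ?thesis
  proof (cases u; cases v)
    assume "u" "v" then show ?thesis by (intro exI[of _ 0]) (simp add: col_def)
  next
    assume "u" "\<not> v" then show ?thesis using assms qa by (intro exI[of _ "qc m a + 1"]) (auto simp add: col_def)
  next
    assume "\<not> u" "v" then show ?thesis using assms qa by (intro exI[of _ "qc m b + 1"]) (auto simp add: col_def)
  next
    assume "\<not> u" "\<not> v"
    moreover have "4 - qc m a - qc m b \<noteq> qc m a + 1" "4 - qc m a - qc m b \<noteq> qc m b + 1"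
       "4 - qc m a - qc m b \<noteq> 0" "4 - qc m a - qc m b < 4" using assms qa by arith+
    ultimately show ?thesis by (intro exI[of _ "4 - qc m a - qc m b"]) (auto simp add: col_def)
  qed
qed

lemma col_unique:
  assumes "qc m a \<noteq> qc m b" "i < 4" "j < 4" "col m i a = col m j a" "col m i b = col m j b"
  shows "i = j"
proof -
  have qa: "qc m a < 3" "qc m b < 3" by (rule qc_lt)+
  show ?thesis using assms qa unfolding col_def by auto
qed

lemma mod13: "(m::nat) \<ge> 4 \<Longrightarrow> a < m \<Longrightarrow> (a + 1) mod m \<noteq> (a + 3) mod m"
  by (cases "a + 3 < m"; cases "a + 1 < m") (auto simp: mod_if)

lemma fac_factor:
  assumes "odd m" "m \<ge> 13" "\<not> 3 dvd m"
  shows "is_Ck_factor (L_verts m) (L_arcs m) m (fac m i)"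
  unfolding is_Ck_factor_def
proof (intro conjI exI)
  show "fac m i \<subseteq> L_arcs m" unfolding fac_def using cyc_sub assms by auto
  let ?C = "{cyc m 1 (col m i), cyc m 3 (\<lambda>a. \<not> col m i a)}"
  show "\<forall>C\<in>?C. is_dicycle m C" using cyc1 cyc3 assms by auto
  show "fac m i = \<Union> ?C" unfolding fac_def by auto
  have v1: "arc_verts (cyc m 1 (col m i)) = (\<lambda>a. (col m i a, a)) ` {0..<m}"
    using verts_cyc assms by auto
  have v3: "arc_verts (cyc m 3 (\<lambda>a. \<not> col m i a)) = (\<lambda>a. (\<not> col m i a, a)) ` {0..<m}"
    using verts_cyc[of m 3 "\<lambda>a. \<not> col m i a"] assms by auto
  show "\<forall>C\<in>?C. \<forall>D\<in>?C. C \<noteq> D \<longrightarrow> arc_verts C \<inter> arc_verts D = {}"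
    using v1 v3 by auto
  show "\<Union> (arc_verts ` ?C) = L_verts m"
  proof (intro equalityI subsetI)
    fix x assume "x \<in> \<Union> (arc_verts ` ?C)" then show "x \<in> L_verts m" using v1 v3 by (auto simp: L_verts_def)
  next
    fix x assume "x \<in> L_verts m"
    then obtain u a where x: "x = (u, a)" "a < m" by (auto simp: L_verts_def)
    show "x \<in> \<Union> (arc_verts ` ?C)"
    proof (cases "col m i a = u")
      case True then show ?thesis using x v1 by auto
    next
      case False then have "(\<not> col m i a) = u" by simp
      then show ?thesis using x v3 by force
    qed
  qed
qed

lemma mem_cyc: "x \<in> cyc m d h \<longleftrightarrow> (\<exists>a<m. x = ((h a, a), (h ((a+d) mod m), (a+d) mod m)))"
  unfolding cyc_def by auto

lemma factorization:
  assumes "odd m" "m \<ge> 13" "\<not> 3 dvd m"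
  shows "has_Ck_factorization (L_verts m) (L_arcs m) m"
  unfolding has_Ck_factorization_def
proof (intro exI conjI)
  let ?F = "fac m ` {0..<4}"
  show "\<forall>F\<in>?F. is_Ck_factor (L_verts m) (L_arcs m) m F" using fac_factor assms by auto
  show "\<Union> ?F = L_arcs m"
  proof (intro equalityI subsetI)
    fix x assume "x \<in> \<Union> ?F" then show "x \<in> L_arcs m"
      unfolding fac_def using cyc_sub[of m 1] cyc_sub[of m 3] assms by auto
  next
    fix x assume "x \<in> L_arcs m"
    then obtain u v a b where x: "x = ((u, a), (v, b))" "a < m" "b < m" "b = (a+1) mod m \<or> b = (a+3) mod m"
      unfolding L_arcs_def by blast
    from x(4) show "x \<in> \<Union> ?F"
    proof
      assume b: "b = (a+1) mod m"
      have "qc m a \<noteq> qc m b" using qc_proper[of m a 1] qc_proper[of m a 3] assms x(2) b by auto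
      then obtain i where i: "i < 4" "col m i a = u" "col m i b = v" using col_cover by blast
      have "x \<in> cyc m 1 (col m i)" unfolding mem_cyc using x i b by auto
      then show ?thesis using i unfolding fac_def by auto
    next
      assume b: "b = (a+3) mod m"
      have "qc m a \<noteq> qc m b" using qc_proper[of m a 1] qc_proper[of m a 3] assms x(2) b by auto
      then obtain i where i: "i < 4" "col m i a = (\<not> u)" "col m i b = (\<not> v)" using col_cover by blast
      have "x \<in> cyc m 3 (\<lambda>a. \<not> col m i a)" unfolding mem_cyc using x i b by auto
      then show ?thesis using i unfolding fac_def by auto
    qed
  qed
  show "\<forall>F\<in>?F. \<forall>G\<in>?F. F \<noteq> G \<longrightarrow> F \<inter> G = {}"
  proof (intro ballI impI)
    fix F G assume F: "F \<in> ?F" and G: "G \<in> ?F" and ne: "F \<noteq> G"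
    obtain i j where ij: "i < 4" "j < 4" "F = fac m i" "G = fac m j" using F G by auto
    show "F \<inter> G = {}"
    proof (rule ccontr)
      assume "F \<inter> G \<noteq> {}"
      then obtain x where "x \<in> fac m i" "x \<in> fac m j" using ij by auto
      then have "\<exists>d h d' h'. (d = 1 \<and> h = col m i \<or> d = 3 \<and> h = (\<lambda>a. \<not> col m i a)) \<and>
                             (d' = 1 \<and> h' = col m j \<or> d' = 3 \<and> h' = (\<lambda>a. \<not> col m j a)) \<and>
                             x \<in> cyc m d h \<and> x \<in> cyc m d' h'"
        unfolding fac_def by blast
      then obtain d h d' h' a a' where dh: "d = 1 \<and> h = col m i \<or> d = 3 \<and> h = (\<lambda>a. \<not> col m i a)"
         "d' = 1 \<and> h' = col m j \<or> d' = 3 \<and> h' = (\<lambda>a. \<not> col m j a)"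
         and a: "a < m" "x = ((h a, a), (h ((a+d) mod m), (a+d) mod m))"
         and a': "a' < m" "x = ((h' a', a'), (h' ((a'+d') mod m), (a'+d') mod m))"
        unfolding mem_cyc by blast
      have aa: "a' = a" using a a' by simp
      have dd: "d = d'"
      proof (rule ccontr)
        assume "d \<noteq> d'"
        then have "(a+1) mod m = (a+3) mod m" using dh a a' aa by auto
        then show False using mod13[of m a] assms a by auto
      qed
      have "qc m a \<noteq> qc m ((a+d) mod m)" using qc_proper assms a dh by blast
      moreover have "h a = h' a" "h ((a+d) mod m) = h' ((a+d) mod m)" using a a' aa dd by auto
      ultimately have "i = j" using col_unique[of m a "(a+d) mod m" i j] dh dd ij by auto
      then show False using ne ij by simp
    qed
  qed
qed



lemma no_cycle3:
  assumes "odd m" "m \<ge> 13" "3 dvd m" "is_dicycle m C" "C \<subseteq> L_arcs m" "((False,0),(False,3)) \<in> C"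
  shows False
proof -
  obtain f where inj: "inj_on f {0..<m}" and Cf: "C = {(f i, f (Suc i mod m)) | i. i < m}"
    using assms(4) unfolding is_dicycle_def by blast
  define g where "g i = snd (f i)" for i
  have m0: "m > 0" using assms(2) by simp
  have step: "g i < m \<and> (g (Suc i mod m) = (g i + 1) mod m \<or> g (Suc i mod m) = (g i + 3) mod m)" if "i < m" for i
  proof -
    have "(f i, f (Suc i mod m)) \<in> L_arcs m" using Cf assms(5) that by blast
    then show ?thesis unfolding L_arcs_def g_def by auto
  qed
  define e where "e i = (if g (Suc i mod m) = (g i + 1) mod m then 0 else 1::nat)" for i
  have st: "g (Suc i mod m) = (g i + 1 + 2 * e i) mod m" if "i < m" for i
  proof -
    show ?thesis
    proof (cases "g (Suc i mod m) = (g i + 1) mod m")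
      case True
      then have "e i = 0" unfolding e_def by simp
      then show ?thesis using True by simp
    next
      case False
      then have "e i = 1" unfolding e_def by simp
      then have h: "g i + 1 + 2 * e i = g i + 3" by simp
      show ?thesis unfolding h using False step[OF that] by blast
    qed
  qed
  have e1: "e i \<le> 1" for i unfolding e_def by auto
  have tel: "g (i mod m) = (g 0 + i + 2 * (\<Sum>j<i. e j)) mod m" if "i \<le> m" for i
    using that
  proof (induction i)
    case 0 then show ?case using step[OF m0] by simp
  next
    case (Suc i)
    then have i: "i < m" by simp
    then have "g (Suc i mod m) = (g i + 1 + 2 * e i) mod m" by (rule st)
    also have "g i = (g 0 + i + 2 * (\<Sum>j<i. e j)) mod m" using Suc i by simp
    finally have "g (Suc i mod m) = ((g 0 + i + 2 * (\<Sum>j<i. e j)) mod m + 1 + 2 * e i) mod m" .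
    also have "\<dots> = ((g 0 + i + 2 * (\<Sum>j<i. e j)) mod m + (1 + 2 * e i)) mod m" by (simp only: add.assoc)
    also have "\<dots> = (g 0 + i + 2 * (\<Sum>j<i. e j) + (1 + 2 * e i)) mod m" by (rule mod_add_left_eq)
    also have "\<dots> = (g 0 + Suc i + 2 * (\<Sum>j<Suc i. e j)) mod m" by (simp add: algebra_simps)
    finally show ?case .
  qed
  define E where "E = (\<Sum>j<m. e j)"
  have "g 0 = (g 0 + m + 2 * E) mod m" using tel[of m] unfolding E_def by simp
  also have "g 0 + m + 2 * E = m + (g 0 + 2 * E)" by simp
  also have "(m + (g 0 + 2 * E)) mod m = (g 0 + 2 * E) mod m" by (rule mod_add_self1)
  finally have "g 0 mod m = (g 0 + 2 * E) mod m" using step[OF m0] by simp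
  then have "m dvd 2 * E" using mod_eq_dvd_iff_nat[of "g 0" "g 0 + 2 * E" m] by simp
  moreover have "coprime m 2" using assms(1) by simp
  ultimately have mE: "m dvd E" using coprime_dvd_mult_right_iff by blast
  have Ele: "E \<le> m" unfolding E_def using sum_bounded_above[of "{..<m}" e 1] e1 by simp
  obtain i0 where i0: "i0 < m" "f i0 = (False, 0)" "f (Suc i0 mod m) = (False, 3)"
    using assms(6) Cf by auto
  have "e i0 = 1" using i0 assms(2) unfolding e_def g_def by auto
  then have "E \<ge> 1" unfolding E_def using i0(1) member_le_sum[of i0 "{..<m}" e] by simp
  then have "E = m" using mE Ele dvd_imp_le[of m E] by simp
  have "(\<Sum>j<m. e j) + (\<Sum>j<m. 1 - e j) = (\<Sum>j<m. e j + (1 - e j))" by (simp add: sum.distrib)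
  also have "\<dots> = m" using e1 by simp
  finally have "(\<Sum>j<m. 1 - e j) = 0" using \<open>E = m\<close> unfolding E_def by simp
  then have eall: "e j = 1" if "j < m" for j
  proof -
    have "\<forall>a\<in>{..<m}. 1 \<le> e a" using \<open>(\<Sum>j<m. 1 - e j) = 0\<close> by simp
    then have "1 \<le> e j" using that by blast
    then show ?thesis using e1[of j] by linarith
  qed
  have g3: "g i = (g 0 + 3 * i) mod m" if "i < m" for i
  proof -
    have "(\<Sum>j<i. e j) = (\<Sum>j<i. 1)" using eall that by (intro sum.cong) auto
    then have "g i = (g 0 + i + 2 * i) mod m" using tel[of i] that by simp
    moreover have "g 0 + i + 2 * i = g 0 + 3 * i" by simp
    ultimately show ?thesis by simp
  qed
  obtain k where k: "m = 3 * k" using assms(3) by blast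
  have kpos: "k > 0" "k < m" "2 * k < m" using k assms(2) by auto
  have gk: "g k = g 0" using g3[of k] kpos k step[OF m0] by simp
  have gk2: "g (2*k) = g 0"
  proof -
    have "g (2*k) = (g 0 + m + m) mod m" using g3[of "2*k"] kpos k by (simp add: algebra_simps)
    then show ?thesis using step[OF m0] by simp
  qed
  have d: "f 0 \<noteq> f k" "f 0 \<noteq> f (2*k)" "f k \<noteq> f (2*k)"
  proof -
    have "0 \<in> {0..<m}" "k \<in> {0..<m}" "2*k \<in> {0..<m}" using kpos by auto
    moreover have "0 \<noteq> k" "0 \<noteq> 2*k" "k \<noteq> 2*k" using kpos by auto
    ultimately show "f 0 \<noteq> f k" "f 0 \<noteq> f (2*k)" "f k \<noteq> f (2*k)" using inj unfolding inj_on_def by blast+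
  qed
  have "fst (f 0) = fst (f k) \<or> fst (f 0) = fst (f (2*k)) \<or> fst (f k) = fst (f (2*k))" by auto
  then show False using d gk gk2 unfolding g_def by (auto simp: prod_eq_iff)
qed


theorem mainTheorem4:
  fixes m :: nat
  assumes "odd m" and "m \<ge> 13"
  shows "has_Ck_factorization (L_verts m) (L_arcs m) m \<longleftrightarrow> \<not> (3 dvd m)"
proof
  assume H: "has_Ck_factorization (L_verts m) (L_arcs m) m"
  show "\<not> 3 dvd m"
  proof
    assume m3: "3 dvd m"
    have w: "(0::nat) < m" "(3::nat) < m" "(3::nat) = (0 + 3) mod m" using assms by auto
    have arc: "((False,0),(False,3)) \<in> L_arcs m" unfolding L_arcs_def using w by blast
    obtain FF where FF: "\<forall>F\<in>FF. is_Ck_factor (L_verts m) (L_arcs m) m F" "\<Union>FF = L_arcs m"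
      using H unfolding has_Ck_factorization_def by blast
    then obtain F where F: "F \<in> FF" "((False,0),(False,3)) \<in> F" using arc by blast
    then have "is_Ck_factor (L_verts m) (L_arcs m) m F" using FF by blast
    then have "F \<subseteq> L_arcs m \<and> (\<exists>CC. (\<forall>C\<in>CC. is_dicycle m C) \<and> F = \<Union>CC)"
      unfolding is_Ck_factor_def
      apply (elim conjE exE)
      apply (intro conjI exI)
        apply assumption+
      done
    then obtain CC where CC: "F \<subseteq> L_arcs m" "\<forall>C\<in>CC. is_dicycle m C" "F = \<Union>CC"
      by blast
    then obtain C where C: "C \<in> CC" "((False,0),(False,3)) \<in> C" using F by blast
    have sub: "C \<subseteq> L_arcs m" using C(1) CC(1,3) by blast
    have dc: "is_dicycle m C" using CC(2) C(1) by blast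
    show False
      using no_cycle3[OF assms(1) assms(2) m3 dc sub C(2)] .
  qed
next
  assume "\<not> 3 dvd m"
  then show "has_Ck_factorization (L_verts m) (L_arcs m) m" using factorization assms by blast
qed

end
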